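(* Let $\mathbb{V}=V\times\{0\}$ be a horizontal homogeneous subgroup of $\mathbb{H}^n$ with $k=\dim V$, and let $\pi_{\mathbb{V}^\perp}\colon\mathbb{H}^n\to\mathbb{V}^\perp$ be the projection associated with $\mathbb{H}^n=\mathbb{V}^\perp\ltimes\mathbb{V}$. Equip $\mathbb{H}^n$ with the Korányi metric and $\mathbb{V}^\perp$ with the Euclidean metric of $\mathbb{R}^{2n+1}$. Then $\pi_{\mathbb{V}^\perp}$ is locally David–Semmes $(k+1)$-regular, i.e. $(\mathbb{H}^n,(\mathbb{V}^\perp,d_{\mathbb{R}^{2n+1}}),\pi_{\mathbb{V}^\perp})$ is a $(k+1)$-foliation.
   Context: $\mathbb{H}^n=\mathbb{R}^{2n}\times\mathbb{R}$ with group law $(x,t)*(x',t')=(x+x',t+t'+2\omega(x,x'))$, $\omega(x,x')=\sum_{i=1}^n(x_{n+i}x'_i-x_ix'_{n+i})$, Korányi metric $d_{\mathbb{H}}(p,q)=\|p^{-1}*q\|_{\mathbb{H}}$, $\|(x,t)\|_{\mathbb{H}}=(|x|^4+t^2)^{1/4}$. Horizontal homogeneous subgroup: $\mathbb{V}=V\times\{0\}$ with $V\subseteq\mathbb{R}^{2n}$ a subspace on which $\omega\equiv0$; $\mathbb{V}^\perp=V^\perp\times\mathbb{R}$. Writing uniquely $p=p_{\mathbb{V}^\perp}*p_{\mathbb{V}}$, set $\pi_{\mathbb{V}^\perp}(p)=p_{\mathbb{V}^\perp}$; its fibers are the left cosets $a*\mathbb{V}$. A surjection $\pi\colon X\to W$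 between proper metric spaces is locally David–Semmes $s$-regular if for every compact $K\subseteq X$, $\pi|_K$ is Lipschitz and there are $C\ge1$, $r_0>0$ such that for every ball $B\subseteq W$ of radius $r<r_0$, $\pi^{-1}(B)\cap K$ can be covered by at most $Cr^{-s}$ balls in $X$ of radius $Cr$; $(X,W,\pi)$ is then an $s$-foliation. *)

theory Defs
  imports "HOL-Analysis.Analysis"
begin

text \<open>Points of R^{2n} are pairs (a,b) of vectors in R^n, with x_i = a_i and
  x_{n+i} = b_i.
  The dimension n is the cardinality of the finite index type 'n.\<close>

type_synonym 'n hvec = "(real^'n) \<times> (real^'n)"
type_synonym 'n heis = "'n hvec \<times> real"

definition omega :: "'n::finite hvec \<Rightarrow> 'n hvec \<Rightarrow> real" where
  "omega x y = (\<Sum>i\<in>UNIV. (snd x) $ i * (fst y) $ i - (fst x) $ i * (snd y) $ i)"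

definition hmult :: "'n::finite heis \<Rightarrow> 'n heis \<Rightarrow> 'n heis" where
  "hmult p q = (fst p + fst q, snd p + snd q + 2 * omega (fst p) (fst q))"

definition hinv :: "'n::finite heis \<Rightarrow> 'n heis" where
  "hinv p = (- fst p, - snd p)"

definition koranyi_norm :: "'n::finite heis \<Rightarrow> real" where
  "koranyi_norm p = root 4 (norm (fst p) ^ 4 + (snd p)\<^sup>2)"

definition koranyi_dist :: "'n::finite heis \<Rightarrow> 'n heis \<Rightarrow> real" where
  "koranyi_dist p q = koranyi_norm (hmult (hinv p) q)"

definition horizontal_subspace :: "'n::finite hvec set \<Rightarrow> bool" where
  "horizontal_subspace V \<longleftrightarrow> subspace V \<and> (\<forall>x\<in>V. \<forall>y\<in>V. omega x y = 0)"

definition hsub :: "'n::finite hvec set \<Rightarrow> 'n heis set" where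
  "hsub V = V \<times> {0}"

definition hsub_perp :: "'n::finite hvec set \<Rightarrow> 'n heis set" where
  "hsub_perp V = {y. \<forall>x\<in>V. inner x y = 0} \<times> UNIV"

definition proj_perp :: "'n::finite hvec set \<Rightarrow> 'n heis \<Rightarrow> 'n heis" where
  "proj_perp V p = (THE q. q \<in> hsub_perp V \<and> (\<exists>r\<in>hsub V. p = hmult q r))"

definition locally_DS_regular ::
  "'a set \<Rightarrow> ('a \<Rightarrow> 'a \<Rightarrow> real) \<Rightarrow> 'b set \<Rightarrow> ('b \<Rightarrow> 'b \<Rightarrow> real) \<Rightarrow> ('a \<Rightarrow> 'b) \<Rightarrow> real \<Rightarrow> bool"
  where
  "locally_DS_regular X dX W dW \<pi> s \<longleftrightarrow>
     \<pi> ` X = W \<and>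
     (\<forall>K. K \<subseteq> X \<and> compactin (Metric_space.mtopology X dX) K \<longrightarrow>
        (\<exists>L. \<forall>p\<in>K. \<forall>q\<in>K. dW (\<pi> p) (\<pi> q) \<le> L * dX p q) \<and>
        (\<exists>C\<ge>1. \<exists>r0>0. \<forall>w\<in>W. \<forall>r. 0 < r \<and> r < r0 \<longrightarrow>
           (\<exists>F. finite F \<and> F \<subseteq> X \<and> real (card F) \<le> C * r powr (- s) \<and>
                {p\<in>K. \<pi> p \<in> Metric_space.mball W dW w r}
                  \<subseteq> (\<Union>c\<in>F. Metric_space.mball X dX c (C * r)))))"

definition s_foliation ::
  "'a set \<Rightarrow> ('a \<Rightarrow> 'a \<Rightarrow> real) \<Rightarrow> 'b set \<Rightarrow> ('b \<Rightarrow> 'b \<Rightarrow> real) \<Rightarrow> ('a \<Rightarrow> 'b) \<Rightarrow> real \<Rightarrow> bool"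
  where "s_foliation X dX W dW \<pi> s \<longleftrightarrow> locally_DS_regular X dX W dW \<pi> s"

end

theory Submission
  imports Defs
begin


lemma omega_inner: "omega x y = inner (snd x, - fst x) y"
  by (simp add: omega_def inner_prod_def inner_vec_def sum_subtractf sum_negf)

lemma omega_add_left: "omega (a + b) c = omega a c + omega b c"
  by (simp add: omega_inner inner_prod_def inner_add_left algebra_simps)
lemma omega_add_right: "omega a (b + c) = omega a b + omega a c"
  by (simp add: omega_inner inner_add_right)
lemma omega_diff_left: "omega (a - b) c = omega a c - omega b c"
  by (simp add: omega_inner inner_prod_def inner_diff_left algebra_simps)
lemma omega_diff_right: "omega a (b - c) = omega a b - omega a c"
  by (simp add: omega_inner inner_diff_right)
lemma omega_minus_left: "omega (- a) c = - omega a c"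
  by (simp add: omega_inner inner_prod_def)
lemma omega_minus_right: "omega a (- c) = - omega a c"
  by (simp add: omega_inner)
lemma omega_zero_left[simp]: "omega 0 c = 0"
  by (simp add: omega_inner inner_prod_def)
lemma omega_zero_right[simp]: "omega a 0 = 0"
  by (simp add: omega_inner)
lemma omega_antisym: "omega a b = - omega b a"
  by (simp add: omega_def sum_negf[symmetric] algebra_simps)
lemma omega_self[simp]: "omega a a = 0"
  using omega_antisym[of a a] by simp

lemma norm_J: "norm (snd x, - fst x) = norm x"
  by (cases x) (simp add: norm_Pair add.commute)

lemma omega_bound: "\<bar>omega x y\<bar> \<le> norm x * norm y"
  using Cauchy_Schwarz_ineq2[of "(snd x, - fst x)" y] by (simp add: omega_inner norm_J)

lemma bessel2:
  fixes u v y :: "'a::real_inner"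
  assumes "inner u v = 0" "norm u = norm v"
  shows "(inner u y)\<^sup>2 + (inner v y)\<^sup>2 \<le> (norm u)\<^sup>2 * (norm y)\<^sup>2"
proof -
  define c where "c = (norm u)\<^sup>2"
  have cv: "inner v v = c" using assms(2) by (simp add: c_def power2_norm_eq_inner)
  have cu: "inner u u = c" by (simp add: c_def power2_norm_eq_inner)
  have vu: "inner v u = 0" using assms(1) by (simp add: inner_commute)
  have "0 \<le> inner (c *\<^sub>R y - inner u y *\<^sub>R u - inner v y *\<^sub>R v) (c *\<^sub>R y - inner u y *\<^sub>R u - inner v y *\<^sub>R v)"
    by simp
  also have "\<dots> = c * (c * inner y y - ((inner u y)\<^sup>2 + (inner v y)\<^sup>2))"
    by (simp add: inner_diff_left inner_diff_right cv cu vu assms(1) inner_commute[of y u] inner_commute[of y v] power2_eq_square algebra_simps)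
  finally have h: "0 \<le> c * (c * inner y y - ((inner u y)\<^sup>2 + (inner v y)\<^sup>2))" .
  show ?thesis
  proof (cases "c = 0")
    case True
    then have "u = 0" "v = 0" using assms(2) by (auto simp: c_def)
    then show ?thesis by simp
  next
    case False
    then have "c > 0" by (simp add: c_def)
    with h have "0 \<le> c * inner y y - ((inner u y)\<^sup>2 + (inner v y)\<^sup>2)"
      by (simp add: zero_le_mult_iff)
    then show ?thesis by (simp add: c_def power2_norm_eq_inner)
  qed
qed

lemma inner_omega_sq: "(inner x y)\<^sup>2 + (omega x y)\<^sup>2 \<le> (norm x)\<^sup>2 * (norm y)\<^sup>2"
proof -
  have "inner x (snd x, - fst x) = 0"
    by (simp add: inner_prod_def inner_commute)
  thus ?thesis using bessel2[of x "(snd x, - fst x)" y] by (simp add: omega_inner norm_J)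
qed

lemma sqrt_inner_omega: "sqrt ((inner x y)\<^sup>2 + (omega x y)\<^sup>2) \<le> norm x * norm y"
  using inner_omega_sq[of x y]
  by (metis mult_nonneg_nonneg norm_ge_zero power_mult_distrib real_le_lsqrt real_sqrt_le_mono real_sqrt_unique)



lemma kn_nonneg: "0 \<le> koranyi_norm p"
  by (simp add: koranyi_norm_def)

lemma kn_pow4: "koranyi_norm p ^ 4 = norm (fst p) ^ 4 + (snd p)\<^sup>2"
  unfolding koranyi_norm_def by (rule real_root_pow_pos2) auto

lemma kn_sq: "(koranyi_norm p)\<^sup>2 = sqrt (((norm (fst p))\<^sup>2)\<^sup>2 + (snd p)\<^sup>2)"
proof -
  have "((koranyi_norm p)\<^sup>2)\<^sup>2 = ((norm (fst p))\<^sup>2)\<^sup>2 + (snd p)\<^sup>2"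
    using kn_pow4[of p] by (simp add: power_mult[symmetric])
  then show ?thesis by (metis real_sqrt_abs abs_of_nonneg zero_le_power2)
qed

lemma norm_fst_le_kn: "norm (fst p) \<le> koranyi_norm p"
proof -
  have "norm (fst p) ^ 4 \<le> koranyi_norm p ^ 4" by (simp add: kn_pow4)
  then show ?thesis using kn_nonneg[of p]
    using power_mono_iff[of "norm (fst p)" "koranyi_norm p" 4] by simp
qed

lemma abs_snd_le_kn: "\<bar>snd p\<bar> \<le> (koranyi_norm p)\<^sup>2"
proof -
  have "(snd p)\<^sup>2 \<le> ((koranyi_norm p)\<^sup>2)\<^sup>2" using kn_pow4[of p]
    by (simp add: power_mult[symmetric])
  then show ?thesis by (metis abs_le_square_iff abs_of_nonneg zero_le_power2)
qed

lemma kn_zero_iff: "koranyi_norm p = 0 \<longleftrightarrow> p = 0"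
proof
  assume "koranyi_norm p = 0"
  then have "norm (fst p) = 0" "snd p = 0"
    using norm_fst_le_kn[of p] abs_snd_le_kn[of p] by auto
  then show "p = 0" by (simp add: prod_eq_iff)
qed (simp add: koranyi_norm_def)

lemma kn_hinv: "koranyi_norm (hinv p) = koranyi_norm p"
  by (simp add: koranyi_norm_def hinv_def)

lemma kn_triangle: "koranyi_norm (hmult a b) \<le> koranyi_norm a + koranyi_norm b"
proof -
  obtain x t y s where ab: "a = (x, t)" "b = (y, s)" by (cases a, cases b) auto
  have nx: "(norm (x + y))\<^sup>2 = (norm x)\<^sup>2 + ((norm y)\<^sup>2 + 2 * inner x y)"
    by (simp add: power2_norm_eq_inner inner_add_left inner_add_right inner_commute[of y x])
  have e1: "(koranyi_norm (hmult a b))\<^sup>2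
      = sqrt (((norm x)\<^sup>2 + ((norm y)\<^sup>2 + 2 * inner x y))\<^sup>2 + (t + (s + 2 * omega x y))\<^sup>2)"
    by (simp add: kn_sq hmult_def ab nx add.assoc)
  have i1: "sqrt (((norm x)\<^sup>2 + ((norm y)\<^sup>2 + 2 * inner x y))\<^sup>2 + (t + (s + 2 * omega x y))\<^sup>2)
     \<le> sqrt (((norm x)\<^sup>2)\<^sup>2 + t\<^sup>2) + sqrt (((norm y)\<^sup>2 + 2 * inner x y)\<^sup>2 + (s + 2 * omega x y)\<^sup>2)"
    by (rule real_sqrt_sum_squares_triangle_ineq)
  have i2: "sqrt (((norm y)\<^sup>2 + 2 * inner x y)\<^sup>2 + (s + 2 * omega x y)\<^sup>2)
      \<le> sqrt (((norm y)\<^sup>2)\<^sup>2 + s\<^sup>2) + sqrt ((2 * inner x y)\<^sup>2 + (2 * omega x y)\<^sup>2)"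
    by (rule real_sqrt_sum_squares_triangle_ineq)
  have e2: "sqrt ((2 * inner x y)\<^sup>2 + (2 * omega x y)\<^sup>2) = 2 * sqrt ((inner x y)\<^sup>2 + (omega x y)\<^sup>2)"
  proof -
    have "(2 * inner x y)\<^sup>2 + (2 * omega x y)\<^sup>2 = 2\<^sup>2 * ((inner x y)\<^sup>2 + (omega x y)\<^sup>2)"
      by (simp add: power2_eq_square algebra_simps)
    then show ?thesis by (simp only: real_sqrt_mult real_sqrt_abs)
  qed
  have i3: "sqrt ((inner x y)\<^sup>2 + (omega x y)\<^sup>2) \<le> koranyi_norm a * koranyi_norm b"
    using sqrt_inner_omega[of x y] mult_mono[OF norm_fst_le_kn[of a] norm_fst_le_kn[of b] kn_nonneg norm_ge_zero]
    by (simp add: ab)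
  have ka: "(koranyi_norm a)\<^sup>2 = sqrt (((norm x)\<^sup>2)\<^sup>2 + t\<^sup>2)" using kn_sq[of a] by (simp add: ab)
  have kb: "(koranyi_norm b)\<^sup>2 = sqrt (((norm y)\<^sup>2)\<^sup>2 + s\<^sup>2)" using kn_sq[of b] by (simp add: ab)
  have "(koranyi_norm (hmult a b))\<^sup>2 \<le> (koranyi_norm a)\<^sup>2 + (koranyi_norm b)\<^sup>2 + 2 * (koranyi_norm a * koranyi_norm b)"
    using e1 i1 i2 e2 i3 ka kb by linarith
  then have "(koranyi_norm (hmult a b))\<^sup>2 \<le> (koranyi_norm a + koranyi_norm b)\<^sup>2"
    by (simp add: power2_sum algebra_simps)
  then show ?thesis by (rule power2_le_imp_le) (simp add: kn_nonneg add_nonneg_nonneg)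
qed

lemma hgroup_id: "hmult (hmult (hinv p) q) (hmult (hinv q) r) = hmult (hinv p) r"
  by (simp add: hmult_def hinv_def omega_add_left omega_add_right omega_minus_left omega_minus_right
      omega_diff_left omega_diff_right omega_antisym[of "fst q" "fst p"] algebra_simps)

lemma hinv_swap: "hinv (hmult (hinv p) q) = hmult (hinv q) p"
  by (simp add: hmult_def hinv_def omega_minus_left omega_minus_right omega_antisym[of "fst q" "fst p"])

lemma kd_metric: "Metric_space UNIV koranyi_dist"
proof
  fix x y z :: "'n::finite heis"
  show "0 \<le> koranyi_dist x y" by (simp add: koranyi_dist_def kn_nonneg)
  show "koranyi_dist x y = koranyi_dist y x"
    by (metis koranyi_dist_def kn_hinv hinv_swap)
  show "koranyi_dist x y = 0 \<longleftrightarrow> x = y"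
  proof -
    obtain a t b s where xy: "x = (a, t)" "y = (b, s)" by (cases x, cases y) auto
    have "koranyi_dist x y = 0 \<longleftrightarrow> b - a = 0 \<and> s - t - 2 * omega a b = 0"
      by (simp add: xy koranyi_dist_def kn_zero_iff hmult_def hinv_def omega_minus_left zero_prod_def)
    also have "\<dots> \<longleftrightarrow> x = y" by (auto simp: xy)
    finally show ?thesis .
  qed
  show "koranyi_dist x z \<le> koranyi_dist x y + koranyi_dist y z"
    by (metis koranyi_dist_def kn_triangle hgroup_id)
qed





lemma norm_pair_le: "norm (a, b) \<le> norm a + norm b"
  by (simp add: norm_Pair sqrt_sum_squares_le_sum_abs[of "norm a" "norm b", simplified]) 

lemma kd_est:
  fixes x y :: "'n::finite hvec"
  shows "norm (y - x) \<le> koranyi_dist (x, t) (y, s)"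
    and "\<bar>s - t - 2 * omega x y\<bar> \<le> (koranyi_dist (x, t) (y, s))\<^sup>2"
proof -
  have e: "hmult (hinv (x, t)) (y, s) = (y - x, s - t - 2 * omega x y)"
    by (simp add: hmult_def hinv_def omega_minus_left)
  show "norm (y - x) \<le> koranyi_dist (x, t) (y, s)"
    using norm_fst_le_kn[of "(y - x, s - t - 2 * omega x y)"] by (simp add: koranyi_dist_def e)
  show "\<bar>s - t - 2 * omega x y\<bar> \<le> (koranyi_dist (x, t) (y, s))\<^sup>2"
    using abs_snd_le_kn[of "(y - x, s - t - 2 * omega x y)"] by (simp add: koranyi_dist_def e)
qed

lemma omega_x_y_bound: "\<bar>omega x y\<bar> \<le> norm x * norm (y - x)"
proof -
  have "omega x y = omega x (y - x)" by (simp add: omega_diff_right)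
  then show ?thesis using omega_bound[of x "y - x"] by simp
qed

lemma time_est:
  fixes x y :: "'n::finite hvec"
  shows "\<bar>s - t\<bar> \<le> (koranyi_dist (x, t) (y, s))\<^sup>2 + 2 * norm x * koranyi_dist (x, t) (y, s)"
proof -
  have "\<bar>omega x y\<bar> \<le> norm x * koranyi_dist (x, t) (y, s)"
    using omega_x_y_bound[of x y] kd_est(1)[of y x t s]
    by (meson mult_left_mono norm_ge_zero order_trans)
  then show ?thesis using kd_est(2)[of s t x y] by linarith
qed

lemma eucl_le_kd:
  fixes x y :: "'n::finite hvec"
  shows "norm ((y, s) - (x, t)) \<le> koranyi_dist (x, t) (y, s) + (koranyi_dist (x, t) (y, s))\<^sup>2
            + 2 * norm x * koranyi_dist (x, t) (y, s)"
proof -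
  have "norm ((y, s) - (x, t)) \<le> norm (y - x) + norm (s - t)"
    using norm_pair_le[of "y - x" "s - t"] by simp
  then show ?thesis using kd_est(1)[of y x t s] time_est[of s t x y] by simp
qed

lemma open_imp_mopen:
  assumes "open U"
  shows "openin (Metric_space.mtopology UNIV (koranyi_dist :: 'n::finite heis \<Rightarrow> _)) U"
  unfolding Metric_space.openin_mtopology[OF kd_metric]
proof (intro conjI allI impI)
  fix p :: "'n heis" assume "p \<in> U"
  then obtain e where e: "e > 0" "ball p e \<subseteq> U" using assms open_contains_ball by blast
  obtain x t where p: "p = (x, t)" by (cases p) auto
  define r where "r = min 1 (e / (2 + 2 * norm x))"
  have r: "r > 0" using e by (simp add: r_def add_pos_nonneg)
  have "Metric_space.mball UNIV koranyi_dist p r \<subseteq> U"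
  proof
    fix q assume q: "q \<in> Metric_space.mball UNIV koranyi_dist p r"
    obtain y s where qq: "q = (y, s)" by (cases q) auto
    define d where "d = koranyi_dist (x, t) (y, s)"
    have d: "d < r" "0 \<le> d" using q by (simp_all add: Metric_space.in_mball[OF kd_metric] p qq d_def koranyi_dist_def kn_nonneg)
    have d1: "d \<le> 1" using d r_def by simp
    have "d\<^sup>2 \<le> d" using d d1 by (simp add: power2_eq_square mult_left_le)
    then have "norm (q - p) \<le> d * (2 + 2 * norm x)"
      using eucl_le_kd[of y s x t] by (simp add: p qq d_def algebra_simps)
    also have "\<dots> < r * (2 + 2 * norm x)"
      using d by (intro mult_strict_right_mono) (auto simp: add_pos_nonneg)
    also have "\<dots> \<le> e"
    proof -
      have pos: "0 < 2 + 2 * norm x" by (simp add: add_pos_nonneg)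
      have "r \<le> e / (2 + 2 * norm x)" by (simp add: r_def)
      then show ?thesis using pos by (simp add: pos_le_divide_eq)
    qed
    finally have "dist p q < e" by (simp add: dist_norm norm_minus_commute)
    then show "q \<in> U" using e by auto
  qed
  then show "\<exists>r>0. Metric_space.mball UNIV koranyi_dist p r \<subseteq> U" using r by blast
qed auto

lemma compact_from_mtop:
  assumes "compactin (Metric_space.mtopology UNIV (koranyi_dist :: 'n::finite heis \<Rightarrow> _)) K"
  shows "compact K"
proof -
  have "continuous_map (Metric_space.mtopology UNIV (koranyi_dist :: 'n::finite heis \<Rightarrow> _)) euclidean id"
    unfolding continuous_map_def
    by (simp add: Metric_space.topspace_mtopology[OF kd_metric] open_imp_mopen)
  from image_compactin[OF assms this] show ?thesis by (simp add: compactin_euclidean_iff)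
qed






definition Pv :: "'n::finite hvec set \<Rightarrow> 'n hvec \<Rightarrow> 'n hvec" where
  "Pv V x = (SOME y. y \<in> V \<and> (\<forall>w\<in>V. inner (x - y) w = 0))"

lemma Pv_ex:
  assumes "subspace V"
  shows "Pv V x \<in> V \<and> (\<forall>w\<in>V. inner (x - Pv V x) w = 0)"
proof -
  have sV: "span V = V" using assms by (simp add: span_eq_iff)
  obtain y z where "y \<in> span V" "\<And>w. w \<in> span V \<Longrightarrow> orthogonal z w" "x = y + z"
    using orthogonal_subspace_decomp_exists[of V x] by blast
  then have "\<exists>y. y \<in> V \<and> (\<forall>w\<in>V. inner (x - y) w = 0)"
    by (intro exI[of _ y]) (auto simp: sV orthogonal_def)
  then show ?thesis unfolding Pv_def by (rule someI_ex)
qed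

lemma Pv_unique:
  assumes "subspace V" "y \<in> V" "\<forall>w\<in>V. inner (x - y) w = 0"
  shows "Pv V x = y"
proof -
  let ?p = "Pv V x"
  have p: "?p \<in> V" "\<forall>w\<in>V. inner (x - ?p) w = 0" using Pv_ex[OF assms(1)] by auto
  have dV: "?p - y \<in> V" using assms(1,2) p(1) by (simp add: subspace_diff)
  have "inner (?p - y) (?p - y) = inner (x - y) (?p - y) - inner (x - ?p) (?p - y)"
    by (simp add: inner_diff_left)
  also have "\<dots> = 0" using dV assms(3) p(2) by simp
  finally show ?thesis by simp
qed

lemma Pv_in: "subspace V \<Longrightarrow> Pv V x \<in> V"
  using Pv_ex by blast

lemma Pv_orth: "subspace V \<Longrightarrow> w \<in> V \<Longrightarrow> inner (x - Pv V x) w = 0"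
  using Pv_ex by blast

lemma Pv_diff:
  assumes "subspace V"
  shows "Pv V (a - b) = Pv V a - Pv V b"
proof (rule Pv_unique[OF assms])
  show "Pv V a - Pv V b \<in> V" using assms by (simp add: Pv_in subspace_diff)
  show "\<forall>w\<in>V. inner (a - b - (Pv V a - Pv V b)) w = 0"
  proof
    fix w assume "w \<in> V"
    then have "inner (a - Pv V a) w = 0" "inner (b - Pv V b) w = 0" using Pv_orth[OF assms] by auto
    then show "inner (a - b - (Pv V a - Pv V b)) w = 0"
      by (simp add: inner_diff_left algebra_simps)
  qed
qed

lemma Pv_perp:
  assumes "subspace V" "\<forall>w\<in>V. inner x w = 0"
  shows "Pv V x = 0"
  using assms by (intro Pv_unique) (auto simp: subspace_0)

lemma norm_Pv:
  assumes "subspace V"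
  shows "norm (Pv V x) \<le> norm x" "norm (x - Pv V x) \<le> norm x"
proof -
  have "inner (x - Pv V x) (Pv V x) = 0" using assms by (simp add: Pv_orth Pv_in)
  then have "(norm x)\<^sup>2 = (norm (x - Pv V x))\<^sup>2 + (norm (Pv V x))\<^sup>2"
    using norm_add_Pythagorean[of "x - Pv V x" "Pv V x"] by (simp add: orthogonal_def)
  then show "norm (Pv V x) \<le> norm x" "norm (x - Pv V x) \<le> norm x"
    by (metis abs_norm_cancel abs_le_square_iff le_add_same_cancel1 le_add_same_cancel2 zero_le_power2)+
qed

lemma proj_perp_eq:
  assumes "horizontal_subspace V"
  shows "proj_perp V (x, t) = (x - Pv V x, t - 2 * omega x (Pv V x))"
proof -
  have sV: "subspace V" using assms by (simp add: horizontal_subspace_def)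
  let ?P = "Pv V x"
  have om: "omega (x - ?P) ?P = omega x ?P" by (simp add: omega_diff_left)
  show ?thesis unfolding proj_perp_def
  proof (rule the_equality)
    show "(x - ?P, t - 2 * omega x ?P) \<in> hsub_perp V \<and>
          (\<exists>r\<in>hsub V. (x, t) = hmult (x - ?P, t - 2 * omega x ?P) r)"
    proof
      show "(x - ?P, t - 2 * omega x ?P) \<in> hsub_perp V"
        using Pv_orth[OF sV] by (auto simp: hsub_perp_def inner_commute)
      show "\<exists>r\<in>hsub V. (x, t) = hmult (x - ?P, t - 2 * omega x ?P) r"
        by (rule bexI[of _ "(?P, 0)"]) (auto simp: hsub_def hmult_def om Pv_in[OF sV])
    qed
  next
    fix q assume q: "q \<in> hsub_perp V \<and> (\<exists>r\<in>hsub V. (x, t) = hmult q r)"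
    then obtain y s v where qq: "q = (y, s)" "\<forall>w\<in>V. inner w y = 0" "v \<in> V"
      "(x, t) = hmult (y, s) (v, 0)"
      by (auto simp: hsub_perp_def hsub_def)
    then have xt: "x = y + v" "t = s + 2 * omega y v" by (auto simp: hmult_def)
    have "?P = v" using qq(2,3) xt(1) by (intro Pv_unique[OF sV]) (auto simp: inner_commute)
    then show "q = (x - ?P, t - 2 * omega x ?P)"
      using qq(1) xt by (simp add: omega_add_left)
  qed
qed






lemma orthonormal_expand:
  fixes v :: "'a::euclidean_space"
  assumes "finite B" "pairwise orthogonal B" "\<And>b. b \<in> B \<Longrightarrow> norm b = 1" "v \<in> span B"
  shows "v = (\<Sum>b\<in>B. inner v b *\<^sub>R b)"
proof -
  obtain u where u: "v = (\<Sum>b\<in>B. u b *\<^sub>R b)" using assms(4) span_finite[OF assms(1)] by auto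
  have "inner v c = u c" if c: "c \<in> B" for c
  proof -
    have "inner v c = (\<Sum>b\<in>B. u b * inner b c)" by (simp add: u inner_sum_left)
    also have "\<dots> = (\<Sum>b\<in>B. if c = b then u b else 0)"
    proof (rule sum.cong)
      fix b assume b: "b \<in> B"
      show "u b * inner b c = (if c = b then u b else 0)"
      proof (cases "c = b")
        case True
        then have "inner b c = 1" using assms(3)[OF c] by (simp add: norm_eq_1)
        then show ?thesis using True by simp
      next
        case False
        then have "inner b c = 0" using assms(2) b c by (auto simp: pairwise_def orthogonal_def)
        then show ?thesis using False by simp
      qed
    qed simp
    also have "\<dots> = u c" using assms(1) c by (simp add: sum.delta)
    finally show ?thesis .
  qed
  then show ?thesis by (simp add: u)
qed

lemma grid_cover:
  fixes V :: "'a::euclidean_space set"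
  assumes "subspace V" "0 < r" "r \<le> 1" "0 \<le> R"
  obtains G where "finite G" "G \<subseteq> V" "real (card G) \<le> ((2 * R + 5) / r) ^ dim V"
    "\<And>v. v \<in> V \<Longrightarrow> norm v \<le> R \<Longrightarrow> \<exists>g\<in>G. norm (v - g) \<le> real (dim V) * r"
proof -
  obtain B where B: "B \<subseteq> V" "pairwise orthogonal B" "\<And>x. x \<in> B \<Longrightarrow> norm x = 1"
    "independent B" "card B = dim V" "span B = V"
    using orthonormal_basis_subspace[OF assms(1)] by metis
  have fB: "finite B" using B(4) by (rule independent_imp_finite)
  define N :: int where "N = ceiling (R / r) + 1"
  define f where "f = (\<lambda>m. \<Sum>b\<in>B. (r * of_int (m b)) *\<^sub>R b)"
  define G where "G = f ` (PiE B (\<lambda>_. {-N..N}))"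
  have fG: "finite G" unfolding G_def by (intro finite_imageI finite_PiE fB) auto
  have N0: "0 \<le> N"
  proof -
    have "0 \<le> R / r" using assms by simp
    then have "0 \<le> ceiling (R / r)" by simp
    then show ?thesis by (simp add: N_def)
  qed
  have "card G \<le> card (PiE B (\<lambda>_. {-N..N}))" unfolding G_def
    by (intro card_image_le finite_PiE fB) auto
  also have "\<dots> = (nat (2 * N + 1)) ^ dim V"
    using fB by (simp add: card_PiE B(5))
  finally have c1: "real (card G) \<le> real (nat (2 * N + 1)) ^ dim V"
    by (metis of_nat_le_iff of_nat_power)
  have "real (nat (2 * N + 1)) = 2 * real_of_int N + 1" using N0 by simp
  also have "\<dots> \<le> 2 * (R / r + 2) + 1" unfolding N_def
    using ceiling_correct[of "R / r"] by simp
  also have "\<dots> \<le> (2 * R + 5) / r"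
  proof -
    have "5 \<le> 5 / r" using assms(2,3) by (simp add: le_divide_eq)
    then show ?thesis by (simp add: add_divide_distrib)
  qed
  finally have c2: "real (nat (2 * N + 1)) \<le> (2 * R + 5) / r" .
  have "real (card G) \<le> ((2 * R + 5) / r) ^ dim V"
    by (rule order_trans[OF c1 power_mono[OF c2]]) simp
  moreover have "\<exists>g\<in>G. norm (v - g) \<le> real (dim V) * r" if v: "v \<in> V" "norm v \<le> R" for v
  proof -
    define m where "m = (\<lambda>b\<in>B. round (inner v b / r))"
    have mP: "m \<in> PiE B (\<lambda>_. {-N..N})"
    proof -
      have "\<bar>m b\<bar> \<le> N" if b: "b \<in> B" for b
      proof -
        have ib: "\<bar>inner v b\<bar> \<le> R" using Cauchy_Schwarz_ineq2[of v b] B(3)[OF b] v(2) by simp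
        have "\<bar>inner v b / r\<bar> \<le> R / r" using abs_div_pos[OF assms(2), of "inner v b"] divide_right_mono[OF ib, of r] assms(2) by simp
        moreover have "\<bar>of_int (round (inner v b / r)) - inner v b / r\<bar> \<le> 1 / 2"
          by (rule of_int_round_abs_le)
        moreover have "R / r \<le> of_int (ceiling (R / r))" by (rule le_of_int_ceiling)
        ultimately have "\<bar>real_of_int (round (inner v b / r))\<bar> \<le> real_of_int N"
          unfolding N_def by linarith
        then show ?thesis using b by (simp add: m_def)
      qed
      then have mb: "\<forall>b\<in>B. m b \<in> {-N..N}" by (metis atLeastAtMost_iff abs_le_iff minus_le_iff)
      then show ?thesis by (auto simp: PiE_def extensional_def m_def)
    qed
    have ve: "v = (\<Sum>b\<in>B. inner v b *\<^sub>R b)"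
      using orthonormal_expand[OF fB B(2) B(3)] v(1) B(6) by blast
    have "norm (v - f m) = norm (\<Sum>b\<in>B. (inner v b - r * of_int (m b)) *\<^sub>R b)"
      by (subst ve) (simp add: f_def sum_subtractf scaleR_diff_left)
    also have "\<dots> \<le> (\<Sum>b\<in>B. norm ((inner v b - r * of_int (m b)) *\<^sub>R b))" by (rule norm_sum)
    also have "\<dots> \<le> (\<Sum>b\<in>B. r)"
    proof (rule sum_mono)
      fix b assume b: "b \<in> B"
      have "\<bar>of_int (round (inner v b / r)) - inner v b / r\<bar> \<le> 1 / 2" by (rule of_int_round_abs_le)
      then have "\<bar>r * of_int (round (inner v b / r)) - inner v b\<bar> \<le> r / 2"
        using assms(2) by (simp add: abs_mult[symmetric] right_diff_distrib[symmetric] field_simps) 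
      then show "norm ((inner v b - r * of_int (m b)) *\<^sub>R b) \<le> r"
        using b B(3)[OF b] assms(2) by (simp add: m_def abs_minus_commute)
    qed
    also have "\<dots> = real (dim V) * r" using B(5) by simp
    finally show ?thesis using mP unfolding G_def by blast
  qed
  moreover have "G \<subseteq> V"
  proof
    fix g assume "g \<in> G"
    then obtain m where "g = f m" unfolding G_def by blast
    moreover have "f m \<in> span B" unfolding f_def
      by (intro span_sum span_scale span_base) auto
    ultimately show "g \<in> V" using B(6) by simp
  qed
  ultimately show ?thesis using that fG by blast
qed






lemma proj_perp_dist:
  assumes "horizontal_subspace V"
  shows "dist (proj_perp V (x, t)) (proj_perp V (y, s))
     \<le> norm (x - y) + (\<bar>t - s\<bar> + 2 * \<bar>omega x (Pv V x) - omega y (Pv V y)\<bar>)"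
proof -
  have sV: "subspace V" using assms by (simp add: horizontal_subspace_def)
  have "dist (proj_perp V (x, t)) (proj_perp V (y, s))
      = norm ((x - Pv V x) - (y - Pv V y), (t - 2 * omega x (Pv V x)) - (s - 2 * omega y (Pv V y)))"
    by (simp add: proj_perp_eq[OF assms] dist_norm)
  also have "\<dots> \<le> norm ((x - Pv V x) - (y - Pv V y)) + norm ((t - 2 * omega x (Pv V x)) - (s - 2 * omega y (Pv V y)))"
    by (rule norm_pair_le)
  also have "norm ((x - Pv V x) - (y - Pv V y)) = norm ((x - y) - Pv V (x - y))"
    by (simp add: Pv_diff[OF sV] algebra_simps)
  also have "\<dots> \<le> norm (x - y)" by (rule norm_Pv(2)[OF sV])
  finally have h: "dist (proj_perp V (x, t)) (proj_perp V (y, s)) \<le> norm (x - y)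
     + norm ((t - 2 * omega x (Pv V x)) - (s - 2 * omega y (Pv V y)))" by simp
  have "norm ((t - 2 * omega x (Pv V x)) - (s - 2 * omega y (Pv V y)))
      = \<bar>(t - s) - 2 * (omega x (Pv V x) - omega y (Pv V y))\<bar>" by (simp add: algebra_simps)
  also have "\<dots> \<le> \<bar>t - s\<bar> + \<bar>2 * (omega x (Pv V x) - omega y (Pv V y))\<bar>"
    by (rule abs_triangle_ineq4)
  finally have "norm ((t - 2 * omega x (Pv V x)) - (s - 2 * omega y (Pv V y)))
      \<le> \<bar>t - s\<bar> + 2 * \<bar>omega x (Pv V x) - omega y (Pv V y)\<bar>"
    using abs_mult[of 2 "omega x (Pv V x) - omega y (Pv V y)"] by simp
  then show ?thesis using h by linarith
qed

lemma kd_le_D: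
  fixes x y :: "'n::finite hvec"
  assumes "norm x \<le> R" "norm y \<le> R" "\<bar>t\<bar> \<le> R" "\<bar>s\<bar> \<le> R" "R \<ge> 1"
  shows "koranyi_dist (x, t) (y, s) \<le> 6 * R\<^sup>2 + 2 * R + 1"
proof -
  define d where "d = koranyi_dist (x, t) (y, s)"
  define T where "T = s - t - 2 * omega x y"
  have e: "hmult (hinv (x, t)) (y, s) = (y - x, T)"
    by (simp add: hmult_def hinv_def omega_minus_left T_def)
  have d4: "d ^ 4 = norm (y - x) ^ 4 + T\<^sup>2"
    using kn_pow4[of "(y - x, T)"] by (simp add: d_def koranyi_dist_def e)
  have n: "norm (y - x) \<le> 2 * R" using assms norm_triangle_ineq4[of y x] by linarith
  have "\<bar>omega x y\<bar> \<le> R * R" using omega_bound[of x y] assms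
    by (meson mult_mono' norm_ge_zero order_trans)
  then have tT: "\<bar>T\<bar> \<le> 2 * R + 2 * R\<^sup>2" using assms by (simp add: T_def power2_eq_square abs_le_iff)
  have "(d\<^sup>2)\<^sup>2 \<le> ((norm (y - x))\<^sup>2 + \<bar>T\<bar>)\<^sup>2"
    using d4 by (simp add: power_mult[symmetric] power2_sum)
  then have "d\<^sup>2 \<le> (norm (y - x))\<^sup>2 + \<bar>T\<bar>"
    by (rule power2_le_imp_le) simp
  also have "\<dots> \<le> (2 * R)\<^sup>2 + (2 * R + 2 * R\<^sup>2)"
    using n tT by (intro add_mono power_mono) auto
  finally have d2: "d\<^sup>2 \<le> 6 * R\<^sup>2 + 2 * R" by (simp add: power2_eq_square)
  have d0: "0 \<le> d" by (simp add: d_def koranyi_dist_def kn_nonneg)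
  show ?thesis
  proof (cases "d \<le> 1")
    case True
    have "0 \<le> 6 * R\<^sup>2 + 2 * R" using assms by simp
    then show ?thesis using True unfolding d_def[symmetric] by linarith
  next
    case False then have "d \<le> d\<^sup>2" by (simp add: power2_eq_square)
    then show ?thesis using d2 unfolding d_def[symmetric] by simp
  qed
qed

lemma lip_part:
  assumes hV: "horizontal_subspace V" and R: "R \<ge> 1" and K: "\<forall>p\<in>K. norm p \<le> R"
  shows "\<exists>L. \<forall>p\<in>K. \<forall>q\<in>K. dist (proj_perp V p) (proj_perp V q) \<le> L * koranyi_dist p (q :: 'n::finite heis)"
proof (intro exI ballI)
  have sV: "subspace V" using hV by (simp add: horizontal_subspace_def)
  define D where "D = 6 * R\<^sup>2 + 2 * R + 1"
  fix p q :: "'n heis" assume pK: "p \<in> K" and qK: "q \<in> K"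
  obtain x t where p: "p = (x, t)" by (cases p) auto
  obtain y s where q: "q = (y, s)" by (cases q) auto
  have np: "norm p \<le> R" "norm q \<le> R" using K pK qK by auto
  have bx: "norm x \<le> R" "\<bar>t\<bar> \<le> R" using np norm_fst_le[of x t] norm_snd_le[of t x] p by auto
  have by': "norm y \<le> R" "\<bar>s\<bar> \<le> R" using np norm_fst_le[of y s] norm_snd_le[of s y] q by auto
  define d where "d = koranyi_dist (x, t) (y, s)"
  have d0: "0 \<le> d" by (simp add: d_def koranyi_dist_def kn_nonneg)
  have dD: "d \<le> D" using kd_le_D[OF bx(1) by'(1) bx(2) by'(2) R] by (simp add: d_def D_def)
  have nxy: "norm (x - y) \<le> d" using kd_est(1)[of y x t s] by (simp add: d_def norm_minus_commute)
  have ts: "\<bar>t - s\<bar> \<le> d\<^sup>2 + 2 * (R * d)"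
  proof -
    have "\<bar>s - t\<bar> \<le> d\<^sup>2 + 2 * norm x * d" using time_est[of s t x y] by (simp add: d_def)
    also have "\<dots> \<le> d\<^sup>2 + 2 * (R * d)" using bx d0 by (simp add: mult_right_mono)
    finally show ?thesis by (simp add: abs_minus_commute)
  qed
  have d2: "d\<^sup>2 \<le> D * d" using dD d0 by (simp add: power2_eq_square mult_right_mono)
  have om: "\<bar>omega x (Pv V x) - omega y (Pv V y)\<bar> \<le> 2 * (R * d)"
  proof -
    have "omega x (Pv V x) - omega y (Pv V y) = omega (x - y) (Pv V x) + omega y (Pv V (x - y))"
      by (simp add: Pv_diff[OF sV] omega_diff_left omega_diff_right)
    then have "\<bar>omega x (Pv V x) - omega y (Pv V y)\<bar> \<le> norm (x - y) * norm (Pv V x) + norm y * norm (Pv V (x - y))"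
      using omega_bound[of "x - y" "Pv V x"] omega_bound[of y "Pv V (x - y)"] by linarith
    also have "\<dots> \<le> d * R + R * d"
      using norm_Pv(1)[OF sV, of x] norm_Pv(1)[OF sV, of "x - y"] bx by' nxy d0
      by (intro add_mono mult_mono) auto
    finally show ?thesis by simp
  qed
  have h1: "norm (x - y) + (\<bar>t - s\<bar> + 2 * \<bar>omega x (Pv V x) - omega y (Pv V y)\<bar>)
      \<le> d + (D * d + 2 * (R * d) + 2 * (2 * (R * d)))"
  proof -
    have a1: "\<bar>t - s\<bar> \<le> D * d + 2 * (R * d)" using ts d2 by linarith
    have a2: "2 * \<bar>omega x (Pv V x) - omega y (Pv V y)\<bar> \<le> 2 * (2 * (R * d))" using om by simp
    show ?thesis using add_mono[OF nxy add_mono[OF a1 a2]] by simp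
  qed
  have "dist (proj_perp V p) (proj_perp V q) \<le> d + (D * d + 2 * (R * d) + 2 * (2 * (R * d)))"
    unfolding p q using order_trans[OF proj_perp_dist[OF hV, of x t y s] h1] .
  also have "\<dots> = (1 + D + 6 * R) * koranyi_dist p q" by (simp add: d_def p q algebra_simps)
  finally show "dist (proj_perp V p) (proj_perp V q) \<le> (1 + D + 6 * R) * koranyi_dist p q" .
qed






lemma cover_identity:
  assumes "omega P g = 0"
  shows "t - (w2 + 2 * omega w1 g + j) - 2 * omega (w1 + g) (w1 + \<delta> + P)
       = (t - 2 * omega (w1 + \<delta> + P) P - w2) + 2 * omega \<delta> (P + w1 + g) - j"
  using assms
  by (simp add: omega_add_left omega_add_right omega_antisym[of g w1] omega_antisym[of w1 \<delta>]
      omega_antisym[of g \<delta>] omega_antisym[of w1 P] omega_antisym[of g P] algebra_simps)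

lemma final_ineq:
  fixes n b r a :: real
  assumes "0 \<le> n" "n \<le> a * r" "\<bar>b\<bar> \<le> r\<^sup>2 / 2" "0 < r" "1 \<le> a"
  shows "n ^ 4 + b\<^sup>2 < ((a + 2) * r) ^ 4"
proof -
  have "n ^ 4 \<le> (a * r) ^ 4" using assms by (intro power_mono) auto
  moreover have "b\<^sup>2 \<le> (r\<^sup>2 / 2)\<^sup>2" using assms by (metis abs_le_square_iff abs_of_nonneg zero_le_divide_iff zero_le_power2 zero_le_numeral)
  moreover have "(a * r) ^ 4 + (r\<^sup>2 / 2)\<^sup>2 < ((a + 2) * r) ^ 4"
  proof -
    have r4: "r ^ 4 > 0" using assms by simp
    have "a ^ 4 + 1 / 4 < (a + 2) ^ 4"
    proof -
      have "a ^ 4 < (a + 2) ^ 4" using assms by (intro power_strict_mono) auto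
      moreover have "1 \<le> (a + 2) ^ 4 - a ^ 4"
      proof -
        have "(a + 2) ^ 4 - a ^ 4 = 8 * a^3 + 24 * a^2 + 32 * a + 16" by (simp add: power_numeral_reduce algebra_simps)
        also have "\<dots> \<ge> 1" using assms by (simp add: add_nonneg_nonneg)
        finally show ?thesis .
      qed
      ultimately show ?thesis by linarith
    qed
    then have "(a ^ 4 + 1 / 4) * r ^ 4 < (a + 2) ^ 4 * r ^ 4" using r4 by simp
    then show ?thesis by (simp add: power_mult_distrib power2_eq_square algebra_simps power_numeral_reduce)
  qed
  ultimately show ?thesis by linarith
qed






lemma W_metric: "Metric_space (A :: 'a::metric_space set) dist"
  by (simp add: Metric_space_def dist_commute dist_triangle)

lemma cover_part:
  fixes V :: "'n::finite hvec set"
  assumes hV: "horizontal_subspace V" and R: "R \<ge> 1" and K: "\<forall>p\<in>K. norm p \<le> R"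
  shows "\<exists>C\<ge>1. \<exists>r0>0. \<forall>w\<in>hsub_perp V. \<forall>r. 0 < r \<and> r < r0 \<longrightarrow>
           (\<exists>F. finite F \<and> F \<subseteq> UNIV \<and> real (card F) \<le> C * r powr (- (real (dim V) + 1)) \<and>
                {p\<in>K. proj_perp V p \<in> Metric_space.mball (hsub_perp V) dist w r}
                  \<subseteq> (\<Union>c\<in>F. Metric_space.mball UNIV koranyi_dist c (C * r)))"
proof -
  have sV: "subspace V" using hV by (simp add: horizontal_subspace_def)
  define k where "k = dim V"
  define M where "M = 6 * R + 2 * real k + 3"
  define C where "C = (real k + 3) + (2 * R + 5) ^ k * (2 * M + 5)"
  have M0: "M \<ge> 0" using R by (simp add: M_def)
  have C1: "C \<ge> 1" using R M0 by (simp add: C_def)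
  have Ck: "real k + 3 \<le> C" using R M0 by (simp add: C_def)
  have CC: "(2 * R + 5) ^ k * (2 * M + 5) \<le> C" using R M0 by (simp add: C_def)
  show ?thesis
  proof (rule exI[of _ C], intro conjI C1, rule exI[of _ 1], intro conjI zero_less_one allI ballI impI)
    fix w r assume w: "w \<in> hsub_perp V" and r: "0 < r \<and> r < (1::real)"
    obtain w1 w2 where ww: "w = (w1, w2)" by (cases w) auto
    obtain G where G: "finite G" "G \<subseteq> V" "real (card G) \<le> ((2 * R + 5) / r) ^ k"
      "\<And>v. v \<in> V \<Longrightarrow> norm v \<le> R \<Longrightarrow> \<exists>g\<in>G. norm (v - g) \<le> real k * r"
      using grid_cover[OF sV, of r R] r R unfolding k_def by auto
    define J :: int where "J = ceiling (M / r) + 1"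
    define h where "h = (\<lambda>(g, j). (w1 + g, w2 + 2 * omega w1 g + of_int j * r\<^sup>2))"
    define F where "F = h ` (G \<times> {-J..J})"
    have fF: "finite F" unfolding F_def using G(1) by auto
    have J0: "0 \<le> J"
    proof -
      have "0 \<le> M / r" using M0 r by simp
      then show ?thesis by (simp add: J_def)
    qed
    have "card F \<le> card (G \<times> {-J..J})" unfolding F_def using G(1) by (intro card_image_le) auto
    also have "\<dots> = card G * nat (2 * J + 1)" by (simp add: card_cartesian_product)
    finally have cF: "real (card F) \<le> real (card G) * real (nat (2 * J + 1))"
      by (metis of_nat_le_iff of_nat_mult)
    have cJ: "real (nat (2 * J + 1)) \<le> (2 * M + 5) / r"
    proof -
      have "real (nat (2 * J + 1)) = 2 * real_of_int J + 1" using J0 by simp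
      also have "\<dots> \<le> 2 * (M / r + 2) + 1" unfolding J_def using ceiling_correct[of "M / r"] by simp
      also have "\<dots> \<le> (2 * M + 5) / r"
      proof -
        have "5 \<le> 5 / r" using r by (simp add: le_divide_eq)
        then show ?thesis by (simp add: add_divide_distrib)
      qed
      finally show ?thesis .
    qed
    have "real (card F) \<le> ((2 * R + 5) / r) ^ k * ((2 * M + 5) / r)"
      using cF G(3) cJ by (meson mult_mono of_nat_0_le_iff order_trans zero_le_power divide_nonneg_pos r M0 R)
    also have "\<dots> = (2 * R + 5) ^ k * (2 * M + 5) * (1 / r ^ Suc k)"
      by (simp add: power_divide)
    also have "\<dots> \<le> C * (1 / r ^ Suc k)" using CC r by (intro mult_right_mono) auto
    also have "1 / r ^ Suc k = r powr (- (real (dim V) + 1))"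
    proof -
      have "r powr (real (dim V) + 1) = r powr real (Suc k)" by (simp add: k_def add.commute)
      also have "\<dots> = r ^ Suc k" by (rule powr_realpow) (use r in simp)
      finally have h: "r powr (real (dim V) + 1) = r ^ Suc k" .
      show ?thesis by (simp only: powr_minus h inverse_eq_divide)
    qed
    finally have card_ok: "real (card F) \<le> C * r powr (- (real (dim V) + 1))" .
    have cover: "{p\<in>K. proj_perp V p \<in> Metric_space.mball (hsub_perp V) dist w r}
                  \<subseteq> (\<Union>c\<in>F. Metric_space.mball UNIV koranyi_dist c (C * r))"
    proof
      fix p assume "p \<in> {p\<in>K. proj_perp V p \<in> Metric_space.mball (hsub_perp V) dist w r}"
      then have pK: "p \<in> K" and pd: "dist w (proj_perp V p) < r"
        by (auto simp: Metric_space.in_mball[OF W_metric])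
      obtain x t where p: "p = (x, t)" by (cases p) auto
      define P where "P = Pv V x"
      define \<delta> where "\<delta> = x - P - w1"
      define e where "e = t - 2 * omega x P - w2"
      have bx: "norm x \<le> R" using K pK p norm_fst_le[of x t] by force
      have PV: "P \<in> V" and nP: "norm P \<le> R" and nxP: "norm (x - P) \<le> R"
        using Pv_in[OF sV] norm_Pv[OF sV, of x] bx by (auto simp: P_def)
      have "dist w (proj_perp V p) = sqrt ((dist w1 (x - P))\<^sup>2 + (dist w2 (t - 2 * omega x P))\<^sup>2)"
        by (simp add: p ww proj_perp_eq[OF hV] P_def dist_Pair_Pair)
      then have "dist w1 (x - P) < r" "dist w2 (t - 2 * omega x P) < r"
        using pd real_sqrt_sum_squares_ge1 real_sqrt_sum_squares_ge2 by (metis order_le_less_trans)+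
      then have nd: "norm \<delta> < r" and ae: "\<bar>e\<bar> < r"
        by (simp_all add: \<delta>_def e_def dist_norm norm_minus_commute algebra_simps abs_minus_commute)
      obtain g where gG: "g \<in> G" and ng: "norm (P - g) \<le> real k * r" using G(4)[OF PV nP] by blast
      have gV: "g \<in> V" using G(2) gG by auto
      have omPg: "omega P g = 0" using hV PV gV by (simp add: horizontal_subspace_def)
      define Q where "Q = e + 2 * omega \<delta> (P + w1 + g)"
      have nw1: "norm w1 \<le> R + 1"
      proof -
        have "w1 = (x - P) - \<delta>" by (simp add: \<delta>_def)
        then have "norm w1 \<le> norm (x - P) + norm \<delta>" by (metis norm_triangle_ineq4)
        then show ?thesis using nxP nd r by linarith
      qed
      have ngg: "norm g \<le> R + real k"
      proof -
        have "norm g \<le> norm P + norm (P - g)" using norm_triangle_sub[of g P] by (simp add: norm_minus_commute)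
        also have "\<dots> \<le> R + real k * r" using nP ng by simp
        also have "\<dots> \<le> R + real k" using r by (simp add: mult_left_le)
        finally show ?thesis .
      qed
      have nsum: "norm (P + w1 + g) \<le> 3 * R + real k + 1"
        using norm_triangle_ineq[of "P + w1" g] norm_triangle_ineq[of P w1] nP nw1 ngg by linarith
      have "\<bar>omega \<delta> (P + w1 + g)\<bar> \<le> r * (3 * R + real k + 1)"
      proof -
        have "norm \<delta> * norm (P + w1 + g) \<le> r * (3 * R + real k + 1)"
          using nd nsum r by (intro mult_mono) auto
        then show ?thesis using omega_bound[of \<delta> "P + w1 + g"] by linarith
      qed
      then have om2: "\<bar>omega \<delta> (P + w1 + g)\<bar> \<le> r * (3 * R + real k + 1)" .
      have "\<bar>Q\<bar> \<le> \<bar>e\<bar> + \<bar>2 * omega \<delta> (P + w1 + g)\<bar>"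
        unfolding Q_def by (rule abs_triangle_ineq)
      also have "\<bar>2 * omega \<delta> (P + w1 + g)\<bar> = 2 * \<bar>omega \<delta> (P + w1 + g)\<bar>" by (simp add: abs_mult)
      finally have "\<bar>Q\<bar> \<le> r + 2 * (r * (3 * R + real k + 1))" using ae om2 by linarith
      then have aQ: "\<bar>Q\<bar> \<le> r * M" by (simp add: M_def algebra_simps)
      define j where "j = round (Q / r\<^sup>2)"
      have jr: "\<bar>of_int j * r\<^sup>2 - Q\<bar> \<le> r\<^sup>2 / 2"
      proof -
        have "\<bar>of_int j - Q / r\<^sup>2\<bar> \<le> 1 / 2" unfolding j_def by (rule of_int_round_abs_le)
        then have "\<bar>of_int j - Q / r\<^sup>2\<bar> * r\<^sup>2 \<le> 1 / 2 * r\<^sup>2" using r by (intro mult_right_mono) auto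
        moreover have "\<bar>of_int j - Q / r\<^sup>2\<bar> * r\<^sup>2 = \<bar>of_int j * r\<^sup>2 - Q\<bar>"
        proof -
          have eq: "(of_int j - Q / r\<^sup>2) * r\<^sup>2 = of_int j * r\<^sup>2 - Q" using r by (simp add: field_simps)
          have "\<bar>of_int j - Q / r\<^sup>2\<bar> * r\<^sup>2 = \<bar>(of_int j - Q / r\<^sup>2) * r\<^sup>2\<bar>"
            by (simp add: abs_mult)
          then show ?thesis using eq by simp
        qed
        ultimately show ?thesis by simp
      qed
      have jJ: "j \<in> {-J..J}"
      proof -
        have "\<bar>Q / r\<^sup>2\<bar> \<le> M / r"
        proof -
          have "\<bar>Q / r\<^sup>2\<bar> = \<bar>Q\<bar> / r\<^sup>2" by (simp add: abs_div_pos r)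
          also have "\<dots> \<le> r * M / r\<^sup>2" using aQ r by (intro divide_right_mono) auto
          also have "\<dots> = M / r" using r by (simp add: power2_eq_square)
          finally show ?thesis .
        qed
        moreover have "\<bar>of_int j - Q / r\<^sup>2\<bar> \<le> 1 / 2" unfolding j_def by (rule of_int_round_abs_le)
        moreover have "M / r \<le> of_int (ceiling (M / r))" by simp
        ultimately have "\<bar>real_of_int j\<bar> \<le> real_of_int J" unfolding J_def by linarith
        then show ?thesis by (simp add: abs_le_iff)
      qed
      define c where "c = h (g, j)"
      have cF: "c \<in> F" unfolding c_def F_def using gG jJ by blast
      have xdec: "x = w1 + \<delta> + P" by (simp add: \<delta>_def)
      have "hmult (hinv c) p = (\<delta> + (P - g), Q - of_int j * r\<^sup>2)"
      proof -
        have "hmult (hinv c) p = (x - (w1 + g), t - (w2 + 2 * omega w1 g + of_int j * r\<^sup>2) - 2 * omega (w1 + g) x)"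
          using omega_minus_left[of "w1 + g" x] by (simp add: c_def h_def hmult_def hinv_def p)
        also have "t - (w2 + 2 * omega w1 g + of_int j * r\<^sup>2) - 2 * omega (w1 + g) x = Q - of_int j * r\<^sup>2"
          unfolding xdec Q_def e_def using cover_identity[OF omPg, of t w2 w1 "of_int j * r\<^sup>2" \<delta>]
          by (simp add: xdec[symmetric])
        also have "x - (w1 + g) = \<delta> + (P - g)" by (simp add: \<delta>_def)
        finally show ?thesis .
      qed
      then have kd4: "koranyi_dist c p ^ 4 = norm (\<delta> + (P - g)) ^ 4 + (Q - of_int j * r\<^sup>2)\<^sup>2"
        by (simp add: koranyi_dist_def kn_pow4)
      have nn: "norm (\<delta> + (P - g)) \<le> (real k + 1) * r"
        using norm_triangle_ineq[of \<delta> "P - g"] nd ng by (simp add: algebra_simps)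
      have "koranyi_dist c p ^ 4 < ((real k + 1 + 2) * r) ^ 4"
        unfolding kd4 using final_ineq[OF norm_ge_zero nn _ _ , of "Q - of_int j * r\<^sup>2"] jr r
        by (simp add: abs_minus_commute)
      also have "\<dots> \<le> (C * r) ^ 4" using Ck r by (intro power_mono mult_right_mono) auto
      finally have k4: "koranyi_dist c p ^ 4 < (C * r) ^ 4" .
      have "0 \<le> C * r" using C1 r by simp
      then have "koranyi_dist c p < C * r" using power_less_imp_less_base[OF k4] by blast
      then show "p \<in> (\<Union>c\<in>F. Metric_space.mball UNIV koranyi_dist c (C * r))"
        using cF by (auto simp: Metric_space.in_mball[OF kd_metric])
    qed
    show "\<exists>F :: 'n heis set. finite F \<and> F \<subseteq> UNIV \<and> real (card F) \<le> C * r powr (- (real (dim V) + 1)) \<and>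
                {p\<in>K. proj_perp V p \<in> Metric_space.mball (hsub_perp V) dist w r}
                  \<subseteq> (\<Union>c\<in>F. Metric_space.mball UNIV koranyi_dist c (C * r))"
      using fF card_ok cover by blast
  qed
qed


theorem proposition6p4:
  fixes V :: "'n::finite hvec set"
  assumes "horizontal_subspace V"
  shows "locally_DS_regular (UNIV :: 'n heis set) koranyi_dist (hsub_perp V) dist
           (proj_perp V) (real (dim V) + 1)"
proof -
  have sV: "subspace V" using assms by (simp add: horizontal_subspace_def)
  have surj: "proj_perp V ` UNIV = hsub_perp V"
  proof
    show "proj_perp V ` UNIV \<subseteq> hsub_perp V"
    proof
      fix q assume "q \<in> proj_perp V ` UNIV"
      then obtain x t where q: "q = proj_perp V (x, t)" by auto
      show "q \<in> hsub_perp V"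
        using Pv_orth[OF sV, of _ x] by (auto simp: q proj_perp_eq[OF assms] hsub_perp_def inner_commute)
    qed
    show "hsub_perp V \<subseteq> proj_perp V ` UNIV"
    proof
      fix w assume w: "w \<in> hsub_perp V"
      obtain w1 s where ww: "w = (w1, s)" by (cases w) auto
      have "\<forall>v\<in>V. inner w1 v = 0" using w by (auto simp: ww hsub_perp_def inner_commute)
      then have "Pv V w1 = 0" by (rule Pv_perp[OF sV])
      then have "proj_perp V (w1, s) = w" by (simp add: proj_perp_eq[OF assms] ww)
      then show "w \<in> proj_perp V ` UNIV" by (metis rangeI)
    qed
  qed
  have rest: "\<forall>K. K \<subseteq> (UNIV :: 'n heis set) \<and> compactin (Metric_space.mtopology UNIV koranyi_dist) K \<longrightarrow>
        (\<exists>L. \<forall>p\<in>K. \<forall>q\<in>K. dist (proj_perp V p) (proj_perp V q) \<le> L * koranyi_dist p q) \<and>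
        (\<exists>C\<ge>1. \<exists>r0>0. \<forall>w\<in>hsub_perp V. \<forall>r. 0 < r \<and> r < r0 \<longrightarrow>
           (\<exists>F. finite F \<and> F \<subseteq> UNIV \<and> real (card F) \<le> C * r powr (- (real (dim V) + 1)) \<and>
                {p\<in>K. proj_perp V p \<in> Metric_space.mball (hsub_perp V) dist w r}
                  \<subseteq> (\<Union>c\<in>F. Metric_space.mball UNIV koranyi_dist c (C * r))))"
  proof (intro allI impI)
    fix K :: "'n heis set"
    assume "K \<subseteq> UNIV \<and> compactin (Metric_space.mtopology UNIV koranyi_dist) K"
    then have "compact K" using compact_from_mtop by blast
    then obtain B where B: "\<forall>p\<in>K. norm p \<le> B" using compact_imp_bounded bounded_iff by metis
    define R where "R = max 1 B"
    have R: "R \<ge> 1" by (simp add: R_def)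
    have KR: "\<forall>p\<in>K. norm p \<le> R" using B by (auto simp: R_def intro: le_max_iff_disj[THEN iffD2])
    show "(\<exists>L. \<forall>p\<in>K. \<forall>q\<in>K. dist (proj_perp V p) (proj_perp V q) \<le> L * koranyi_dist p q) \<and>
        (\<exists>C\<ge>1. \<exists>r0>0. \<forall>w\<in>hsub_perp V. \<forall>r. 0 < r \<and> r < r0 \<longrightarrow>
           (\<exists>F. finite F \<and> F \<subseteq> UNIV \<and> real (card F) \<le> C * r powr (- (real (dim V) + 1)) \<and>
                {p\<in>K. proj_perp V p \<in> Metric_space.mball (hsub_perp V) dist w r}
                  \<subseteq> (\<Union>c\<in>F. Metric_space.mball UNIV koranyi_dist c (C * r))))"
      using lip_part[OF assms R KR] cover_part[OF assms R KR] by blast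
  qed
  show ?thesis unfolding locally_DS_regular_def using surj rest by blast
qed


end
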